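(* Let $s$ be a bounded continuous proper scoring rule with convex exposure on an $n$-outcome forecast domain $\mathcal{D}$, with exposure function $\mathbf{g}$, and let $M$ be an upper bound on $\|\mathbf{g}\|_2$ over $\mathcal{D}$. For time steps $t=1,\dots,T$, an agent chooses a weight vector $\mathbf{w}^t\in\Delta^m$, after which forecasts $\mathbf{p}_1^t,\dots,\mathbf{p}_m^t\in\mathcal{D}$ and an outcome $j^t\in[n]$ are chosen adversarially and the agent receives score $s(\mathbf{p}^*_t(\mathbf{w}^t);j^t)$, where $\mathbf{p}^*_t(\mathbf{w})$ denotes the QA pool of $(\mathbf{p}_i^t,w_i)_{i=1}^m$ with respect to $\mathbf{g}$. Let $L^t(\mathbf{w}):=-s(\mathbf{p}^*_t(\mathbf{w});j^t)$. Suppose the agent plays as follows: $\mathbf{w}^1\in\Delta^m$ is arbitrary, and for each $t$, with $\eta_t:=\frac{1}{M\sqrt{mt}}$, it sets $\tilde{\mathbf{w}}^{t+1}=\mathbf{w}^t-\eta_t\nabla L^t(\mathbf{w}^t)$ and lets $\mathbf{w}^{t+1}$ be $\tilde{\mathbf{w}}^{t+1}$ if it lies in $\Delta^m$ and otherwise the orthogonal (Euclidean) projection of $\tilde{\mathbf{w}}^{t+1}$ onto $\Delta^m$. Then for every $\mathbf{w}^*\in\Delta^m$, \[\sum_{t=1}^T\Big(s(\mathbf{p}^*_t(\mathbf{w}^* );j^t)-s(\mathbf{p}^*_t(\mathbf{w}^t);j^t)\Big)\le 3\sqrt{m}\,M\sqrt{T}.\]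
   Context: $\Delta^k$ is the standard simplex in $\mathbb{R}^k$. An $n$-outcome forecast domain is a convex $(n-1)$-dimensional subset of $\Delta^n$. A proper scoring rule on $\mathcal{D}$ is $s:\mathcal{D}\times[n]\to\mathbb{R}$ with $\sum_j p(j)s(\mathbf{p};j)\ge\sum_j p(j)s(\mathbf{x};j)$ for all $\mathbf{p},\mathbf{x}\in\mathcal{D}$, equality only if $\mathbf{x}=\mathbf{p}$. $G(\mathbf{p}):=\sum_j p(j)s(\mathbf{p};j)$ is differentiable and strictly convex; the exposure function is $\mathbf{g}=\nabla G$, with values understood modulo translation by the all-ones vector (equivalently projected onto $\{\mathbf{x}:\sum_i x_i=0\}$). Convex exposure: range of $\mathbf{g}$ is convex. The QA pool of $(\mathbf{p}_i,w_i)$ is the unique $\mathbf{p}^*\in\mathcal{D}$ with $\mathbf{g}(\mathbf{p}^* )=\sum_i w_i\mathbf{g}(\mathbf{p}_i)$ (modulo the all-ones vector). The gradient $\nabla L^t$ is taken with respect to $\mathbf{w}$ and is likewise interpreted modulo translation by the all-ones vector in $\mathbb{R}^m$. *)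

theory Defs
  imports "HOL-Analysis.Analysis"
begin

definition prob_simplex :: "(real ^ 'k) set" where
  "prob_simplex = {x. (\<forall>i. 0 \<le> x $ i) \<and> (\<Sum>i\<in>UNIV. x $ i) = 1}"

definition ones :: "real ^ 'k" where
  "ones = (\<chi> i. 1)"

definition forecast_domain :: "(real ^ 'n) set \<Rightarrow> bool" where
  "forecast_domain D \<longleftrightarrow> D \<subseteq> prob_simplex \<and> convex D \<and> aff_dim D = int CARD('n) - 1"

definition proper_scoring_rule :: "(real ^ 'n) set \<Rightarrow> (real ^ 'n \<Rightarrow> 'n \<Rightarrow> real) \<Rightarrow> bool" where
  "proper_scoring_rule D s \<longleftrightarrow>
     (\<forall>p\<in>D. \<forall>x\<in>D. (\<Sum>j\<in>UNIV. p $ j * s p j) \<ge> (\<Sum>j\<in>UNIV. p $ j * s x j)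
        \<and> ((\<Sum>j\<in>UNIV. p $ j * s p j) = (\<Sum>j\<in>UNIV. p $ j * s x j) \<longrightarrow> x = p))"

definition expected_score :: "(real ^ 'n \<Rightarrow> 'n \<Rightarrow> real) \<Rightarrow> real ^ 'n \<Rightarrow> real" where
  "expected_score s p = (\<Sum>j\<in>UNIV. p $ j * s p j)"

text \<open>g is the exposure function of s on D: the gradient of G (relative to D),
  represented by its projection onto the sum-zero hyperplane.\<close>
definition exposure_function ::
  "(real ^ 'n) set \<Rightarrow> (real ^ 'n \<Rightarrow> 'n \<Rightarrow> real) \<Rightarrow> (real ^ 'n \<Rightarrow> real ^ 'n) \<Rightarrow> bool" where
  "exposure_function D s g \<longleftrightarrow>
     (\<forall>p\<in>D. (\<Sum>i\<in>UNIV. g p $ i) = 0 \<and>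
        (expected_score s has_derivative (\<lambda>h. g p \<bullet> h)) (at p within D))"

definition QA_pool ::
  "(real ^ 'n) set \<Rightarrow> (real ^ 'n \<Rightarrow> real ^ 'n) \<Rightarrow> ('m::finite \<Rightarrow> real ^ 'n) \<Rightarrow> real ^ 'm \<Rightarrow> real ^ 'n" where
  "QA_pool D g ps w =
     (THE q. q \<in> D \<and> (\<exists>c::real. g q = (\<Sum>i\<in>UNIV. w $ i *\<^sub>R g (ps i)) + c *\<^sub>R ones))"

end

theory Submission
  imports Defs
begin

lemma simplex_mem: "x \<in> prob_simplex \<longleftrightarrow> (\<forall>i. 0 \<le> x $ i) \<and> (\<Sum>i\<in>UNIV. x $ i) = 1"
  by (simp add: prob_simplex_def)

lemma simplex_le1: assumes "x \<in> prob_simplex" shows "x $ i \<le> 1"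
proof -
  have "x $ i \<le> (\<Sum>k\<in>UNIV. x $ k)"
    using assms by (intro member_le_sum) (auto simp: prob_simplex_def)
  then show ?thesis using assms by (simp add: prob_simplex_def)
qed

lemma closed_simplex: "closed (prob_simplex :: (real^'k) set)"
proof -
  have "prob_simplex = (\<Inter>i. {x::real^'k. 0 \<le> x $ i}) \<inter> {x. (\<Sum>i\<in>UNIV. x $ i) = 1}"
    by (auto simp: prob_simplex_def)
  moreover have "closed {x::real^'k. (\<Sum>i\<in>UNIV. x $ i) = 1}"
    by (intro closed_Collect_eq continuous_intros)
  moreover have "closed {x::real^'k. 0 \<le> x $ i}" for i
    by (intro closed_Collect_le continuous_intros)
  ultimately show ?thesis by (metis closed_INT closed_Int)
qed

lemma convex_simplex: "convex (prob_simplex :: (real^'k) set)"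
  unfolding convex_def prob_simplex_def
  by (auto simp: sum.distrib sum_distrib_left[symmetric])

lemma simplex_nonempty: "(prob_simplex :: (real^'k) set) \<noteq> {}"
proof -
  obtain k :: 'k where True by auto
  have "axis k 1 \<in> prob_simplex"
    by (auto simp: prob_simplex_def axis_def)
  then show ?thesis by auto
qed

lemma ones_inner: "x \<in> prob_simplex \<Longrightarrow> ones \<bullet> x = 1"
  by (simp add: ones_def inner_vec_def prob_simplex_def)

lemma simplex_dist2:
  assumes "x \<in> prob_simplex" "y \<in> prob_simplex"
  shows "norm (x - y)^2 \<le> 2"
proof -
  have "norm (x - y)^2 = (\<Sum>i\<in>UNIV. (x$i - y$i)^2)"
    unfolding power2_norm_eq_inner inner_vec_def by (simp add: power2_eq_square)
  also have "\<dots> \<le> (\<Sum>i\<in>UNIV. x$i + y$i)"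
  proof (intro sum_mono)
    fix i
    have "0 \<le> x$i" "x$i \<le> 1" "0 \<le> y$i" "y$i \<le> 1"
      using assms simplex_le1 by (auto simp: prob_simplex_def)
    then show "(x$i - y$i)^2 \<le> x$i + y$i"
      by (smt (verit, best) mult_left_le mult_nonneg_nonneg power2_eq_square power2_diff)
  qed
  also have "\<dots> = 2" using assms by (simp add: sum.distrib prob_simplex_def)
  finally show ?thesis .
qed


lemma dq_tendsto:
  fixes f :: "'a::real_normed_vector \<Rightarrow> real"
  assumes df: "(f has_derivative f') (at x within S)"
    and seg: "\<And>\<tau>. \<tau> \<in> {0..1} \<Longrightarrow> x + \<tau> *\<^sub>R h \<in> S"
  shows "((\<lambda>\<tau>. (f (x + \<tau> *\<^sub>R h) - f x) / \<tau>) \<longlongrightarrow> f' h) (at_right 0)"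
proof -
  let ?c = "\<lambda>\<tau>::real. x + \<tau> *\<^sub>R h"
  have g: "(?c has_derivative (\<lambda>\<tau>. \<tau> *\<^sub>R h)) (at 0 within {0..1})"
    by (auto intro!: derivative_eq_intros)
  have "?c ` {0..1} \<subseteq> S" using seg by auto
  then have "(f has_derivative f') (at (?c 0) within ?c ` {0..1})"
    using has_derivative_subset[OF _ ] df by simp
  from diff_chain_within[OF g this]
  have "((f \<circ> ?c) has_derivative (f' \<circ> (\<lambda>\<tau>. \<tau> *\<^sub>R h))) (at 0 within {0..1})" .
  moreover have "f' \<circ> (\<lambda>\<tau>. \<tau> *\<^sub>R h) = (*) (f' h)"
  proof -
    have "linear f'" using df has_derivative_linear by blast
    then show ?thesis by (auto simp: o_def linear_scale mult.commute)
  qed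
  ultimately have "((f \<circ> ?c) has_field_derivative (f' h)) (at 0 within {0..1})"
    by (simp add: has_field_derivative_def)
  then have "((\<lambda>\<tau>. ((f \<circ> ?c) \<tau> - (f \<circ> ?c) 0) / (\<tau> - 0)) \<longlongrightarrow> f' h) (at 0 within {0..1})"
    using has_field_derivative_iff by blast
  then show ?thesis by (simp add: at_within_Icc_at_right o_def)
qed

lemma dq_bounds:
  fixes f :: "'a::real_normed_vector \<Rightarrow> real"
  assumes df: "(f has_derivative f') (at x within S)"
    and seg: "\<And>\<tau>. \<tau> \<in> {0..1} \<Longrightarrow> x + \<tau> *\<^sub>R h \<in> S"
    and lo: "\<And>\<tau>. \<tau> \<in> {0<..1} \<Longrightarrow> L \<le> (f (x + \<tau> *\<^sub>R h) - f x) / \<tau>"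
  shows "L \<le> f' h"
proof -
  have ev: "eventually (\<lambda>\<tau>. \<tau> \<in> {0<..1}) (at_right (0::real))"
    by (simp add: eventually_at_right_field) (auto intro!: exI[of _ 1])
  show ?thesis
    by (rule tendsto_lowerbound[OF dq_tendsto[OF df seg]])
       (auto intro: eventually_mono[OF ev] lo)
qed

lemma dq_bounds_up:
  fixes f :: "'a::real_normed_vector \<Rightarrow> real"
  assumes df: "(f has_derivative f') (at x within S)"
    and seg: "\<And>\<tau>. \<tau> \<in> {0..1} \<Longrightarrow> x + \<tau> *\<^sub>R h \<in> S"
    and up: "\<And>\<tau>. \<tau> \<in> {0<..1} \<Longrightarrow> (f (x + \<tau> *\<^sub>R h) - f x) / \<tau> \<le> U \<tau>"
    and U: "(U \<longlongrightarrow> u) (at_right 0)"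
  shows "f' h \<le> u"
proof -
  have ev: "eventually (\<lambda>\<tau>. \<tau> \<in> {0<..1}) (at_right (0::real))"
    by (simp add: eventually_at_right_field) (auto intro!: exI[of _ 1])
  show ?thesis
    by (rule tendsto_le[OF _ U dq_tendsto[OF df seg]])
       (auto intro: eventually_mono[OF ev] up)
qed


lemma sum_comb:
  fixes x h :: "real^'n"
  shows "(\<Sum>k\<in>UNIV. (x + \<tau> *\<^sub>R h) $ k * f k) = (\<Sum>k\<in>UNIV. x $ k * f k) + \<tau> * (\<Sum>k\<in>UNIV. h $ k * f k)"
  by (simp add: algebra_simps sum.distrib sum_distrib_left)

lemma savage_orth:
  fixes D :: "(real^'n) set" and s :: "real^'n \<Rightarrow> 'n \<Rightarrow> real"
  assumes conv: "convex D" and proper: "proper_scoring_rule D s"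
    and cont: "\<forall>k. continuous_on D (\<lambda>q. s q k)"
    and exp: "exposure_function D s g" and xD: "x \<in> D" and rD: "r \<in> D"
  shows "(\<Sum>k\<in>UNIV. (r - x)$k * s x k) = g x \<bullet> (r - x)"
proof -
  define h where "h = r - x"
  have seg: "x + \<tau> *\<^sub>R h \<in> D" if "\<tau> \<in> {0..1}" for \<tau>
  proof -
    have "x + \<tau> *\<^sub>R h = (1 - \<tau>) *\<^sub>R x + \<tau> *\<^sub>R r" by (simp add: h_def algebra_simps)
    then show ?thesis using conv xD rD that by (simp add: convexD)
  qed
  let ?G = "expected_score s"
  have dG: "(?G has_derivative (\<lambda>h. g x \<bullet> h)) (at x within D)"
    using exp xD by (simp add: exposure_function_def)
  have Gdef: "?G p = (\<Sum>j\<in>UNIV. p $ j * s p j)" for p by (simp add: expected_score_def)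
  have lo: "(\<Sum>k\<in>UNIV. h$k * s x k) \<le> (?G (x + \<tau> *\<^sub>R h) - ?G x) / \<tau>" if "\<tau> \<in> {0<..1}" for \<tau>
  proof -
    have pD: "x + \<tau> *\<^sub>R h \<in> D" using seg that by auto
    have "(\<Sum>j\<in>UNIV. (x + \<tau> *\<^sub>R h) $ j * s x j) \<le> ?G (x + \<tau> *\<^sub>R h)"
      using proper pD xD unfolding proper_scoring_rule_def Gdef by blast
    then have "?G x + \<tau> * (\<Sum>k\<in>UNIV. h$k * s x k) \<le> ?G (x + \<tau> *\<^sub>R h)"
      using sum_comb[of x \<tau> h "s x"] unfolding Gdef by linarith
    then show ?thesis using that by (simp add: field_simps)
  qed
  have up: "(?G (x + \<tau> *\<^sub>R h) - ?G x) / \<tau> \<le> (\<Sum>k\<in>UNIV. h$k * s (x + \<tau> *\<^sub>R h) k)" if "\<tau> \<in> {0<..1}" for \<tau>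
  proof -
    have pD: "x + \<tau> *\<^sub>R h \<in> D" using seg that by auto
    have "(\<Sum>j\<in>UNIV. x $ j * s (x + \<tau> *\<^sub>R h) j) \<le> ?G x"
      using proper pD xD unfolding proper_scoring_rule_def Gdef by blast
    moreover have "?G (x + \<tau> *\<^sub>R h) = (\<Sum>j\<in>UNIV. x $ j * s (x + \<tau> *\<^sub>R h) j) + \<tau> * (\<Sum>k\<in>UNIV. h$k * s (x + \<tau> *\<^sub>R h) k)"
      unfolding Gdef by (rule sum_comb)
    ultimately show ?thesis using that by (simp add: field_simps)
  qed
  have U: "((\<lambda>\<tau>. \<Sum>k\<in>UNIV. h$k * s (x + \<tau> *\<^sub>R h) k) \<longlongrightarrow> (\<Sum>k\<in>UNIV. h$k * s x k)) (at_right 0)"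
  proof -
    have "((\<lambda>\<tau>. s (x + \<tau> *\<^sub>R h) k) \<longlongrightarrow> s x k) (at_right 0)" for k
    proof -
      have "continuous_on {0..1} (\<lambda>\<tau>::real. x + \<tau> *\<^sub>R h)" by (intro continuous_intros)
      moreover have "(\<lambda>\<tau>::real. x + \<tau> *\<^sub>R h) ` {0..1} \<subseteq> D" using seg by auto
      ultimately have "continuous_on {0..1} (\<lambda>\<tau>::real. s (x + \<tau> *\<^sub>R h) k)"
        using cont continuous_on_compose2 by blast
      from continuous_on_Icc_at_rightD[OF this] show ?thesis by simp
    qed
    then show ?thesis by (intro tendsto_intros)
  qed
  have "(\<Sum>k\<in>UNIV. h$k * s x k) \<le> g x \<bullet> h"
    using dq_bounds[OF dG seg lo] by simp
  moreover have "g x \<bullet> h \<le> (\<Sum>k\<in>UNIV. h$k * s x k)"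
    using dq_bounds_up[OF dG seg up U] by simp
  ultimately show ?thesis by (simp add: h_def)
qed


lemma savage:
  fixes D :: "(real^'n) set" and s :: "real^'n \<Rightarrow> 'n \<Rightarrow> real"
  assumes dom: "forecast_domain D" and proper: "proper_scoring_rule D s"
    and cont: "\<forall>k. continuous_on D (\<lambda>q. s q k)"
    and exp: "exposure_function D s g" and xD: "x \<in> D"
  shows "\<exists>c. \<forall>k. s x k = g x $ k + c"
proof -
  have sub: "D \<subseteq> prob_simplex" and conv: "convex D" and ad: "aff_dim D = int CARD('n) - 1"
    using dom by (auto simp: forecast_domain_def)
  define y where "y = (\<chi> k. s x k) - g x"
  define c where "c = (\<Sum>k\<in>UNIV. y$k) / real CARD('n)"
  define z where "z = y - c *\<^sub>R ones"
  have zH: "ones \<bullet> z = 0"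
    by (simp add: z_def c_def ones_def inner_vec_def sum_subtractf)
  have orth: "z \<bullet> (r - x) = 0" if "r \<in> D" for r
  proof -
    have "y \<bullet> (r - x) = (\<Sum>k\<in>UNIV. (r - x)$k * s x k) - g x \<bullet> (r - x)"
    proof -
      have "(\<chi> k. s x k) \<bullet> (r - x) = (\<Sum>k\<in>UNIV. (r - x)$k * s x k)"
        unfolding inner_vec_def by (simp add: mult.commute)
      then show ?thesis by (simp add: y_def inner_diff_left)
    qed
    also have "\<dots> = 0" using savage_orth[OF conv proper cont exp xD that] by simp
    finally have "y \<bullet> (r - x) = 0" .
    moreover have "ones \<bullet> (r - x) = 0"
    proof -
      have "ones \<bullet> r = 1" "ones \<bullet> x = 1" using sub that xD by (auto intro!: ones_inner)
      then show ?thesis by (simp add: inner_diff_right)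
    qed
    ultimately show ?thesis by (simp add: z_def inner_diff_left)
  qed
  define T where "T = (\<lambda>r. r - x) ` D"
  define H where "H = {h::real^'n. ones \<bullet> h = 0}"
  have "aff_dim D = int (dim T)"
    unfolding T_def by (rule aff_dim_eq_dim_subtract) (simp add: hull_inc xD)
  then have dimT: "dim T = CARD('n) - 1" using ad by linarith
  have ones_nz: "ones \<noteq> (0::real^'n)"
    by (metis ones_def vec_lambda_beta zero_index zero_neq_one)
  have dimH: "dim H = CARD('n) - 1"
    unfolding H_def using dim_hyperplane[OF ones_nz] by simp
  have subH: "subspace H" unfolding H_def by (rule subspace_hyperplane)
  have TH: "T \<subseteq> H"
  proof
    fix t assume "t \<in> T"
    then obtain r where r: "r \<in> D" "t = r - x" by (auto simp: T_def)
    have "ones \<bullet> r = 1" "ones \<bullet> x = 1" using sub r xD by (auto intro!: ones_inner)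
    then show "t \<in> H" using r by (simp add: H_def inner_diff_right)
  qed
  have spanH: "span T \<subseteq> H" using TH subH by (simp add: span_minimal)
  have "span T = H"
    by (rule subspace_dim_equal[OF subspace_span subH spanH]) (simp add: dimT dimH dim_span)
  then have "z \<in> span T" using zH H_def by simp
  then have "orthogonal z z"
    by (rule orthogonal_to_span) (auto simp: T_def orthogonal_def orth)
  then have "z = 0" by (simp add: orthogonal_def)
  then have "\<forall>k. s x k = g x $ k + c"
    by (auto simp: z_def y_def ones_def vec_eq_iff algebra_simps)
  then show ?thesis by blast
qed


lemma g_inj:
  fixes D :: "(real^'n) set" and s :: "real^'n \<Rightarrow> 'n \<Rightarrow> real"
  assumes dom: "forecast_domain D" and proper: "proper_scoring_rule D s"
    and cont: "\<forall>k. continuous_on D (\<lambda>q. s q k)"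
    and exp: "exposure_function D s g" and qD: "q \<in> D" and q'D: "q' \<in> D"
    and eq: "g q = g q'"
  shows "q = q'"
proof -
  have sub: "D \<subseteq> prob_simplex" using dom by (auto simp: forecast_domain_def)
  obtain c where c: "\<forall>k. s q k = g q $ k + c" using savage[OF dom proper cont exp qD] by blast
  obtain c' where c': "\<forall>k. s q' k = g q $ k + c'" using savage[OF dom proper cont exp q'D] eq by auto
  have sq: "(\<Sum>k\<in>UNIV. q $ k) = 1" "(\<Sum>k\<in>UNIV. q' $ k) = 1"
    using sub qD q'D by (auto simp: prob_simplex_def)
  have d1: "(\<Sum>j\<in>UNIV. q $ j * s q j) - (\<Sum>j\<in>UNIV. q $ j * s q' j) = c - c'"
  proof -
    have "(\<Sum>j\<in>UNIV. q $ j * s q j) - (\<Sum>j\<in>UNIV. q $ j * s q' j) = (\<Sum>j\<in>UNIV. q $ j * (c - c'))"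
      by (simp add: c c' sum_subtractf[symmetric] algebra_simps)
    also have "\<dots> = c - c'" using sq by (simp add: sum_distrib_right[symmetric])
    finally show ?thesis .
  qed
  have d2: "(\<Sum>j\<in>UNIV. q' $ j * s q' j) - (\<Sum>j\<in>UNIV. q' $ j * s q j) = c' - c"
  proof -
    have "(\<Sum>j\<in>UNIV. q' $ j * s q' j) - (\<Sum>j\<in>UNIV. q' $ j * s q j) = (\<Sum>j\<in>UNIV. q' $ j * (c' - c))"
      by (simp add: c c' sum_subtractf[symmetric] algebra_simps)
    also have "\<dots> = c' - c" using sq by (simp add: sum_distrib_right[symmetric])
    finally show ?thesis .
  qed
  have p1: "(\<Sum>j\<in>UNIV. q $ j * s q j) \<ge> (\<Sum>j\<in>UNIV. q $ j * s q' j)"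
    and p1e: "(\<Sum>j\<in>UNIV. q $ j * s q j) = (\<Sum>j\<in>UNIV. q $ j * s q' j) \<longrightarrow> q' = q"
    using proper qD q'D unfolding proper_scoring_rule_def by blast+
  have p2: "(\<Sum>j\<in>UNIV. q' $ j * s q' j) \<ge> (\<Sum>j\<in>UNIV. q' $ j * s q j)"
    using proper qD q'D unfolding proper_scoring_rule_def by blast
  from p1 p2 d1 d2 have "c = c'" by linarith
  with d1 have "(\<Sum>j\<in>UNIV. q $ j * s q j) = (\<Sum>j\<in>UNIV. q $ j * s q' j)" by simp
  with p1e show ?thesis by simp
qed

lemma QA_char:
  fixes D :: "(real^'n) set" and s :: "real^'n \<Rightarrow> 'n \<Rightarrow> real"
    and ps :: "'m::finite \<Rightarrow> real^'n"
  assumes dom: "forecast_domain D" and proper: "proper_scoring_rule D s"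
    and cont: "\<forall>k. continuous_on D (\<lambda>q. s q k)"
    and exp: "exposure_function D s g" and cexp: "convex (g ` D)"
    and psD: "\<forall>i. ps i \<in> D" and w: "w \<in> prob_simplex"
  shows "QA_pool D g ps w \<in> D \<and> g (QA_pool D g ps w) = (\<Sum>i\<in>UNIV. w $ i *\<^sub>R g (ps i))"
proof -
  define u where "u = (\<Sum>i\<in>UNIV. w $ i *\<^sub>R g (ps i))"
  have "u \<in> g ` D" unfolding u_def
    by (rule convex_sum[OF _ cexp]) (use w psD in \<open>auto simp: prob_simplex_def\<close>)
  then obtain q where qD: "q \<in> D" and gq: "g q = u" by auto
  have gsum: "(\<Sum>k\<in>UNIV. g p $ k) = 0" if "p \<in> D" for p
    using exp that by (simp add: exposure_function_def)
  have usum: "(\<Sum>k\<in>UNIV. u $ k) = 0"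
  proof -
    have "(\<Sum>k\<in>UNIV. u $ k) = (\<Sum>k\<in>UNIV. \<Sum>i\<in>UNIV. w $ i * g (ps i) $ k)"
      by (simp add: u_def sum_component)
    also have "\<dots> = (\<Sum>i\<in>UNIV. w $ i * (\<Sum>k\<in>UNIV. g (ps i) $ k))"
      by (subst sum.swap) (simp add: sum_distrib_left)
    also have "\<dots> = 0" using gsum psD by simp
    finally show ?thesis .
  qed
  have "QA_pool D g ps w = q"
    unfolding QA_pool_def u_def[symmetric]
  proof (rule the_equality)
    show "q \<in> D \<and> (\<exists>c. g q = u + c *\<^sub>R ones)" using qD gq by (auto intro!: exI[of _ 0])
  next
    fix y assume "y \<in> D \<and> (\<exists>c. g y = u + c *\<^sub>R ones)"
    then obtain c where yD: "y \<in> D" and gy: "g y = u + c *\<^sub>R ones" by auto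
    have "(\<Sum>k\<in>UNIV. g y $ k) = (\<Sum>k\<in>UNIV. u $ k) + c * real CARD('n)"
      by (simp add: gy ones_def sum.distrib)
    then have "c * real CARD('n) = 0" using gsum[OF yD] usum by simp
    then have "c = 0" by simp
    then have "g y = g q" using gy gq by simp
    then show "y = q" using g_inj[OF dom proper cont exp yD qD] by simp
  qed
  then show ?thesis using qD gq u_def by simp
qed


definition agrad :: "(real ^ 'n) set \<Rightarrow> (real ^ 'n \<Rightarrow> real ^ 'n) \<Rightarrow> ('m::finite \<Rightarrow> real ^ 'n) \<Rightarrow> 'n \<Rightarrow> real ^ 'm \<Rightarrow> real ^ 'm"
  where "agrad D g ps j w = (\<chi> i. (QA_pool D g ps w - axis j 1) \<bullet> g (ps i))"

lemma subgrad:
  fixes D :: "(real^'n) set" and s :: "real^'n \<Rightarrow> 'n \<Rightarrow> real"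
    and ps :: "'m::finite \<Rightarrow> real^'n"
  assumes dom: "forecast_domain D" and proper: "proper_scoring_rule D s"
    and cont: "\<forall>k. continuous_on D (\<lambda>q. s q k)"
    and exp: "exposure_function D s g" and cexp: "convex (g ` D)"
    and psD: "\<forall>i. ps i \<in> D" and w: "w \<in> prob_simplex" and w': "w' \<in> prob_simplex"
  shows "agrad D g ps j w \<bullet> (w' - w) \<le> s (QA_pool D g ps w) j - s (QA_pool D g ps w') j"
proof -
  define q where "q = QA_pool D g ps w"
  define q' where "q' = QA_pool D g ps w'"
  have qD: "q \<in> D" and gq: "g q = (\<Sum>i\<in>UNIV. w $ i *\<^sub>R g (ps i))"
    using QA_char[OF dom proper cont exp cexp psD w] by (auto simp: q_def)
  have q'D: "q' \<in> D" and gq': "g q' = (\<Sum>i\<in>UNIV. w' $ i *\<^sub>R g (ps i))"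
    using QA_char[OF dom proper cont exp cexp psD w'] by (auto simp: q'_def)
  have sub: "D \<subseteq> prob_simplex" using dom by (auto simp: forecast_domain_def)
  have sq: "(\<Sum>k\<in>UNIV. q $ k) = 1" using sub qD by (auto simp: prob_simplex_def)
  obtain c where c: "\<forall>k. s q k = g q $ k + c" using savage[OF dom proper cont exp qD] by blast
  obtain c' where c': "\<forall>k. s q' k = g q' $ k + c'" using savage[OF dom proper cont exp q'D] by blast
  have "(\<Sum>k\<in>UNIV. q $ k * s q' k) \<le> (\<Sum>k\<in>UNIV. q $ k * s q k)"
    using proper qD q'D unfolding proper_scoring_rule_def by blast
  moreover have "(\<Sum>k\<in>UNIV. q $ k * s q' k) = g q' \<bullet> q + c'"
    using sq by (simp add: c' inner_vec_def algebra_simps sum.distrib sum_distrib_left[symmetric])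
  moreover have "(\<Sum>k\<in>UNIV. q $ k * s q k) = g q \<bullet> q + c"
    using sq by (simp add: c inner_vec_def algebra_simps sum.distrib sum_distrib_left[symmetric])
  ultimately have cc: "g q' \<bullet> q + c' \<le> g q \<bullet> q + c" by simp
  have "s q j - s q' j = g q $ j - g q' $ j + c - c'" by (simp add: c c')
  also have "\<dots> \<ge> (g q' - g q) \<bullet> (q - axis j 1)"
  proof -
    have "(g q' - g q) \<bullet> (q - axis j 1) = g q' \<bullet> q - g q \<bullet> q - g q' $ j + g q $ j"
      by (simp add: inner_diff_left inner_diff_right inner_axis)
    then show ?thesis using cc by simp
  qed
  finally have A: "(g q' - g q) \<bullet> (q - axis j 1) \<le> s q j - s q' j" .
  have "g q' - g q = (\<Sum>i\<in>UNIV. (w' $ i - w $ i) *\<^sub>R g (ps i))"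
    by (simp add: gq gq' sum_subtractf[symmetric] scaleR_diff_left)
  then have "(g q' - g q) \<bullet> (q - axis j 1) = (\<Sum>i\<in>UNIV. (w' $ i - w $ i) * (g (ps i) \<bullet> (q - axis j 1)))"
    by (simp add: inner_sum_left)
  also have "\<dots> = agrad D g ps j w \<bullet> (w' - w)"
    by (simp add: agrad_def inner_vec_def q_def inner_commute mult.commute)
  finally show ?thesis using A by (simp add: q_def q'_def)
qed

lemma agrad_norm:
  fixes D :: "(real^'n) set" and s :: "real^'n \<Rightarrow> 'n \<Rightarrow> real"
    and ps :: "'m::finite \<Rightarrow> real^'n"
  assumes dom: "forecast_domain D" and proper: "proper_scoring_rule D s"
    and cont: "\<forall>k. continuous_on D (\<lambda>q. s q k)"
    and exp: "exposure_function D s g" and cexp: "convex (g ` D)"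
    and psD: "\<forall>i. ps i \<in> D" and w: "w \<in> prob_simplex"
    and Mb: "\<forall>q\<in>D. norm (g q) \<le> M"
  shows "norm (agrad D g ps j w) ^ 2 \<le> 2 * real CARD('m) * M^2"
proof -
  define q where "q = QA_pool D g ps w"
  have qD: "q \<in> D"
    using QA_char[OF dom proper cont exp cexp psD w] by (auto simp: q_def)
  have sub: "D \<subseteq> prob_simplex" using dom by (auto simp: forecast_domain_def)
  have ax: "axis j 1 \<in> prob_simplex" by (auto simp: prob_simplex_def axis_def)
  have nq: "norm (q - axis j 1) ^ 2 \<le> 2" using simplex_dist2 qD sub ax by blast
  have trm: "((q - axis j 1) \<bullet> g (ps i))^2 \<le> 2 * M^2" for i
  proof -
    have "\<bar>(q - axis j 1) \<bullet> g (ps i)\<bar> \<le> norm (q - axis j 1) * norm (g (ps i))"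
      by (rule Cauchy_Schwarz_ineq2)
    then have "((q - axis j 1) \<bullet> g (ps i))^2 \<le> (norm (q - axis j 1) * norm (g (ps i)))^2"
      by (metis abs_ge_zero power2_abs power_mono)
    also have "\<dots> = norm (q - axis j 1)^2 * norm (g (ps i))^2" by (simp add: power_mult_distrib)
    also have "\<dots> \<le> 2 * M^2"
      using nq Mb psD by (intro mult_mono power_mono) auto
    finally show ?thesis .
  qed
  have "norm (agrad D g ps j w) ^ 2 = (\<Sum>i\<in>UNIV. ((q - axis j 1) \<bullet> g (ps i))^2)"
  proof -
    have "norm x ^ 2 = (\<Sum>i\<in>UNIV. (x$i)^2)" for x :: "real^'m"
      unfolding power2_norm_eq_inner inner_vec_def by (simp add: power2_eq_square)
    then show ?thesis by (simp add: agrad_def q_def)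
  qed
  also have "\<dots> \<le> (\<Sum>i\<in>(UNIV::'m set). 2 * M^2)" by (intro sum_mono trm)
  also have "\<dots> = 2 * real CARD('m) * M^2" by simp
  finally show ?thesis .
qed


lemma ogd_alg:
  fixes a b d e :: "'a::real_inner"
  assumes eta: "\<eta> \<ge> 0" and F1: "(\<eta> *\<^sub>R a + \<eta> *\<^sub>R b + d) \<bullet> (e + d) \<le> 0" and bd: "b \<bullet> d \<ge> 0"
  shows "norm (d + e)^2 \<le> norm e^2 - 2*\<eta>*((a+b)\<bullet>e) + \<eta>^2 * norm a^2"
proof -
  have "0 \<le> (d + \<eta> *\<^sub>R a) \<bullet> (d + \<eta> *\<^sub>R a)" by simp
  then have z: "0 \<le> d \<bullet> d + 2 * \<eta> * (a \<bullet> d) + \<eta>^2 * (a \<bullet> a)"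
    by (simp add: inner_add_left inner_add_right inner_commute power2_eq_square algebra_simps)
  have b2: "0 \<le> \<eta> * (b \<bullet> d)" using eta bd by simp
  have f: "\<eta> * (a \<bullet> e) + \<eta> * (b \<bullet> e) + d \<bullet> e + \<eta> * (a \<bullet> d) + \<eta> * (b \<bullet> d) + d \<bullet> d \<le> 0"
    using F1 by (simp add: inner_add_left inner_add_right inner_commute algebra_simps)
  have l: "norm (d + e)^2 = d \<bullet> d + 2 * (d \<bullet> e) + e \<bullet> e"
    by (simp add: power2_norm_eq_inner inner_add_left inner_add_right inner_commute)
  have r: "norm e^2 - 2*\<eta>*((a+b)\<bullet>e) + \<eta>^2 * norm a^2 = e \<bullet> e - 2*\<eta>*(a\<bullet>e) - 2*\<eta>*(b\<bullet>e) + \<eta>^2 * (a \<bullet> a)"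
    by (simp add: power2_norm_eq_inner inner_add_left algebra_simps)
  show ?thesis unfolding l r using z b2 f by linarith
qed


lemma step:
  fixes D :: "(real^'n) set" and s :: "real^'n \<Rightarrow> 'n \<Rightarrow> real"
    and ps :: "'m::finite \<Rightarrow> real^'n"
  assumes dom: "forecast_domain D" and proper: "proper_scoring_rule D s"
    and cont: "\<forall>k. continuous_on D (\<lambda>q. s q k)"
    and exp: "exposure_function D s g" and cexp: "convex (g ` D)"
    and Mb: "\<forall>q\<in>D. norm (g q) \<le> M"
    and psD: "\<forall>i. ps i \<in> D" and w: "w \<in> prob_simplex" and ws: "wstar \<in> prob_simplex"
    and df: "((\<lambda>u. - s (QA_pool D g ps u) j) has_derivative (\<lambda>h. v \<bullet> h)) (at w within prob_simplex)"
    and eta: "\<eta> \<ge> 0"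
  shows "s (QA_pool D g ps wstar) j - s (QA_pool D g ps w) j \<le> v \<bullet> (w - wstar)"
    and "norm (closest_point prob_simplex (w - \<eta> *\<^sub>R v) - wstar)^2
           \<le> norm (w - wstar)^2 - 2*\<eta>*(v \<bullet> (w - wstar)) + \<eta>^2 * (2 * real CARD('m) * M^2)"
proof -
  define F where "F u = - s (QA_pool D g ps u) j" for u
  have dF: "(F has_derivative (\<lambda>h. v \<bullet> h)) (at w within prob_simplex)"
    using df by (simp add: F_def[abs_def])
  have sg: "agrad D g ps j x \<bullet> (y - x) \<le> F y - F x" if "x \<in> prob_simplex" "y \<in> prob_simplex" for x y
    using subgrad[OF dom proper cont exp cexp psD that] by (simp add: F_def)
  have seg: "x + \<tau> *\<^sub>R (y - x) \<in> prob_simplex"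
    if "x \<in> prob_simplex" "y \<in> prob_simplex" "\<tau> \<in> {0..1}" for x y and \<tau>::real
  proof -
    have "x + \<tau> *\<^sub>R (y - x) = (1 - \<tau>) *\<^sub>R x + \<tau> *\<^sub>R y" by (simp add: algebra_simps)
    then show ?thesis using convexD[OF convex_simplex, of x y "1 - \<tau>" \<tau>] that by auto
  qed
  \<comment> \<open>regret bound via convexity\<close>
  have "v \<bullet> (wstar - w) \<le> F wstar - F w"
  proof (rule dq_bounds_up[OF dF, where U = "\<lambda>_. F wstar - F w"])
    show "w + \<tau> *\<^sub>R (wstar - w) \<in> prob_simplex" if "\<tau> \<in> {0..1}" for \<tau>
      using seg[OF w ws that] .
    show "((\<lambda>_. F wstar - F w) \<longlongrightarrow> F wstar - F w) (at_right 0)" by simp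
    fix \<tau> :: real assume t: "\<tau> \<in> {0<..1}"
    define wt where "wt = w + \<tau> *\<^sub>R (wstar - w)"
    have wt: "wt \<in> prob_simplex" using seg[OF w ws] t by (auto simp: wt_def)
    have e1: "agrad D g ps j wt \<bullet> (w - wt) \<le> F w - F wt" using sg[OF wt w] .
    have e2: "agrad D g ps j wt \<bullet> (wstar - wt) \<le> F wstar - F wt" using sg[OF wt ws] .
    have "(1 - \<tau>) * (agrad D g ps j wt \<bullet> (w - wt)) + \<tau> * (agrad D g ps j wt \<bullet> (wstar - wt)) = 0"
      by (simp add: wt_def inner_diff_right inner_add_right algebra_simps)
    moreover have "(1 - \<tau>) * (agrad D g ps j wt \<bullet> (w - wt)) \<le> (1 - \<tau>) * (F w - F wt)"
      using e1 t by (intro mult_left_mono) auto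
    moreover have "\<tau> * (agrad D g ps j wt \<bullet> (wstar - wt)) \<le> \<tau> * (F wstar - F wt)"
      using e2 t by (intro mult_left_mono) auto
    ultimately have "F wt - F w \<le> \<tau> * (F wstar - F w)" by (simp add: algebra_simps)
    then show "(F (w + \<tau> *\<^sub>R (wstar - w)) - F w) / \<tau> \<le> F wstar - F w"
      using t by (simp add: wt_def divide_le_eq mult.commute)
  qed
  then show "s (QA_pool D g ps wstar) j - s (QA_pool D g ps w) j \<le> v \<bullet> (w - wstar)"
    by (simp add: F_def inner_diff_right)
  define a where "a = agrad D g ps j w"
  define b where "b = v - a"
  define z where "z = closest_point prob_simplex (w - \<eta> *\<^sub>R v)"
  have zS: "z \<in> prob_simplex" unfolding z_def
    using closest_point_in_set closed_simplex simplex_nonempty by blast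
  have bz: "b \<bullet> (z - w) \<ge> 0"
  proof -
    have "a \<bullet> (z - w) \<le> v \<bullet> (z - w)"
    proof (rule dq_bounds[OF dF])
      show "w + \<tau> *\<^sub>R (z - w) \<in> prob_simplex" if "\<tau> \<in> {0..1}" for \<tau>
        using seg[OF w zS that] .
      fix \<tau> :: real assume t: "\<tau> \<in> {0<..1}"
      have wt: "w + \<tau> *\<^sub>R (z - w) \<in> prob_simplex" using seg[OF w zS] t by auto
      have "a \<bullet> ((w + \<tau> *\<^sub>R (z - w)) - w) \<le> F (w + \<tau> *\<^sub>R (z - w)) - F w"
        unfolding a_def using sg[OF w wt] .
      then show "a \<bullet> (z - w) \<le> (F (w + \<tau> *\<^sub>R (z - w)) - F w) / \<tau>"
        using t by (simp add: le_divide_eq mult.commute)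
    qed
    then show ?thesis by (simp add: b_def inner_diff_left)
  qed
  have F1: "((w - \<eta> *\<^sub>R v) - z) \<bullet> (wstar - z) \<le> 0"
    unfolding z_def by (rule closest_point_dot[OF convex_simplex closed_simplex ws])
  have F1': "(\<eta> *\<^sub>R a + \<eta> *\<^sub>R b + (z - w)) \<bullet> ((w - wstar) + (z - w)) \<le> 0"
  proof -
    have e1: "\<eta> *\<^sub>R a + \<eta> *\<^sub>R b + (z - w) = - ((w - \<eta> *\<^sub>R v) - z)"
      by (simp add: b_def algebra_simps)
    have e2: "(w - wstar) + (z - w) = - (wstar - z)" by simp
    show ?thesis unfolding e1 e2 inner_minus_left inner_minus_right minus_minus using F1 .
  qed
  have main: "norm ((z - w) + (w - wstar))^2 \<le> norm (w - wstar)^2 - 2*\<eta>*((a+b)\<bullet>(w - wstar)) + \<eta>^2 * norm a^2"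
    by (rule ogd_alg[OF eta F1' bz])
  have na: "norm a ^ 2 \<le> 2 * real CARD('m) * M^2"
    unfolding a_def by (rule agrad_norm[OF dom proper cont exp cexp psD w Mb])
  have "\<eta>^2 * norm a^2 \<le> \<eta>^2 * (2 * real CARD('m) * M^2)"
    using na by (intro mult_left_mono) auto
  with main show "norm (closest_point prob_simplex (w - \<eta> *\<^sub>R v) - wstar)^2
           \<le> norm (w - wstar)^2 - 2*\<eta>*(v \<bullet> (w - wstar)) + \<eta>^2 * (2 * real CARD('m) * M^2)"
    by (simp add: z_def[symmetric] b_def)
qed


lemma arith_step:
  fixes x y dt dn K S r :: real
  assumes "0 \<le> x" "y^2 = x^2 + 1" "0 < y" "0 \<le> dt" "dt \<le> 2" "0 \<le> dn" "0 < K"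
    and S: "S \<le> 3*K*x - dt*K*x/2" and r: "r \<le> (dt - dn)*K*y/2 + K/y"
  shows "S + r \<le> 3*K*y - dn*K*y/2"
proof -
  have yx: "x \<le> y" using assms by (smt (verit) power_mono)
  have "1 \<le> 2*y*(y - x)"
  proof -
    have "0 \<le> (y - x)^2" by simp
    then show ?thesis using assms(2) by (simp add: power2_eq_square algebra_simps)
  qed
  then have "1 / y \<le> 2*(y - x)" using assms(3) by (simp add: divide_le_eq mult.commute mult.left_commute)
  define z where "z = K*(y - x)"
  have k1: "K / y \<le> 2*z" unfolding z_def using \<open>1 / y \<le> 2*(y - x)\<close> assms(7)
    by (metis mult.commute mult_left_mono less_imp_le times_divide_eq_right mult_1_right mult.assoc)
  have k2: "dt*z \<le> 2*z" using assms yx unfolding z_def by (intro mult_right_mono) auto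
  have Ky: "K*y = K*x + z" by (simp add: z_def algebra_simps)
  have e0: "(dt - dn)*K*y/2 = dt*(K*y)/2 - dn*(K*y)/2" by (simp add: field_simps)
  have e00: "dt*(K*y) = dt*(K*x) + dt*z" by (simp only: Ky distrib_left)
  have e1: "(dt - dn)*K*y/2 = dt*(K*x)/2 + dt*z/2 - dn*(K*y)/2" using e0 e00 by linarith
  have e2: "dt*K*x/2 = dt*(K*x)/2" "dn*K*y/2 = dn*(K*y)/2" "3*K*x = 3*(K*x)" "3*K*y = 3*(K*y)" by simp_all
  show ?thesis using S r k1 k2 Ky unfolding e1 e2 by linarith
qed

lemma arith_r:
  fixes K y \<eta> r dt dn :: real
  assumes "0 < K" "0 < y" "\<eta> = 1/(K*y)" "dn \<le> dt - 2*\<eta>*r + \<eta>^2*(2*K^2)"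
  shows "r \<le> (dt - dn)*K*y/2 + K/y"
proof -
  have h: "K*\<eta>*y = 1" using assms by (simp add: field_simps)
  have "\<eta>^2*(2*K^2)*y^2 = 2*(K*\<eta>*y)^2" by (simp add: power_mult_distrib mult_ac)
  then have "\<eta>^2*(2*K^2)*y^2 = 2" using h by simp
  then have "\<eta>^2*(2*K^2) = 2/y^2" using assms(2) by (simp add: eq_divide_eq)
  then have "2*\<eta>*r \<le> dt - dn + 2/y^2" using assms(4) by linarith
  then have "(K*y/2) * (2*\<eta>*r) \<le> (K*y/2) * (dt - dn + 2/y^2)"
    using assms by (intro mult_left_mono) auto
  moreover have "(K*y/2) * (2*\<eta>*r) = r" using assms by (simp add: field_simps)
  moreover have "(K*y/2) * (dt - dn + 2/y^2) = (dt - dn)*K*y/2 + K/y"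
    using assms by (simp add: field_simps power2_eq_square)
  ultimately show ?thesis by metis
qed


theorem theorem5p5:
  fixes D :: "(real ^ 'n) set"
    and s :: "real ^ 'n \<Rightarrow> 'n \<Rightarrow> real"
    and g :: "real ^ 'n \<Rightarrow> real ^ 'n"
    and M :: real
    and p :: "nat \<Rightarrow> 'm::finite \<Rightarrow> real ^ 'n"
    and j :: "nat \<Rightarrow> 'n"
    and w :: "nat \<Rightarrow> real ^ 'm"
    and v :: "nat \<Rightarrow> real ^ 'm"
    and wstar :: "real ^ 'm"
    and T :: nat
  assumes domain: "forecast_domain D"
    and proper: "proper_scoring_rule D s"
    and bounded: "\<exists>B. \<forall>q\<in>D. \<forall>k. \<bar>s q k\<bar> \<le> B"
    and continuous: "\<forall>k. continuous_on D (\<lambda>q. s q k)"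
    and exposure: "exposure_function D s g"
    and convex_exposure: "convex (g ` D)"
    and M_bound: "\<forall>q\<in>D. norm (g q) \<le> M"
    and forecasts: "\<forall>t\<ge>1. \<forall>i. p t i \<in> D"
    and w1: "w 1 \<in> prob_simplex"
    and gradient: "\<forall>t\<ge>1. ((\<lambda>u. - s (QA_pool D g (p t) u) (j t)) has_derivative (\<lambda>h. v t \<bullet> h))
                      (at (w t) within prob_simplex)"
    and update: "\<forall>t\<ge>1. w (t + 1) =
                   (let wt = w t - (1 / (M * sqrt (real CARD('m) * real t))) *\<^sub>R v t
                    in if wt \<in> prob_simplex then wt else closest_point prob_simplex wt)"
    and wstar: "wstar \<in> prob_simplex"
  shows "(\<Sum>t = 1..T. s (QA_pool D g (p t) wstar) (j t) - s (QA_pool D g (p t) (w t)) (j t))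
           \<le> 3 * sqrt (real CARD('m)) * M * sqrt (real T)"
proof -
  have "aff_dim D = int CARD('n) - 1" using domain by (simp add: forecast_domain_def)
  then have "D \<noteq> {}"
  proof (intro notI)
    assume ad: "aff_dim D = int CARD('n) - 1" and "D = {}"
    then have "int CARD('n) - 1 = -1" by simp
    then show False by simp
  qed
  then obtain q0 where "q0 \<in> D" by blast
  then have M0: "0 \<le> M" using M_bound norm_ge_zero order_trans by blast
  define R where "R t = s (QA_pool D g (p t) wstar) (j t) - s (QA_pool D g (p t) (w t)) (j t)" for t
  show ?thesis
  proof (cases "M = 0")
    case True
    then have g0: "g q = 0" if "q \<in> D" for q using M_bound that by auto
    have "R t = 0" if "t \<in> {1..T}" for t
    proof -
      have "\<forall>i. g (p t i) = 0" using g0 forecasts that by auto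
      then show ?thesis by (simp add: R_def QA_pool_def)
    qed
    then show ?thesis using True by (simp add: R_def[symmetric])
  next
    case False
    then have Mpos: "0 < M" using M0 by simp
    define K where "K = sqrt (real CARD('m)) * M"
    have Kpos: "0 < K" using Mpos by (simp add: K_def)
    have upd: "w (t + 1) = closest_point prob_simplex (w t - (1 / (K * sqrt (real t))) *\<^sub>R v t)" if "t \<ge> 1" for t
    proof -
      have e: "M * sqrt (real CARD('m) * real t) = K * sqrt (real t)"
        by (simp add: K_def real_sqrt_mult)
      have u: "w (t + 1) = (let wt = w t - (1 / (K * sqrt (real t))) *\<^sub>R v t
                    in if wt \<in> prob_simplex then wt else closest_point prob_simplex wt)"
        using update[rule_format, OF that] unfolding e .
      show ?thesis
      proof (cases "w t - (1 / (K * sqrt (real t))) *\<^sub>R v t \<in> prob_simplex")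
        case True
        then show ?thesis using u closest_point_self[OF True] by (simp add: Let_def)
      next
        case False
        then show ?thesis using u by (simp add: Let_def)
      qed
    qed
    have wS: "w t \<in> prob_simplex" if "t \<ge> 1" for t
      using that
    proof (induction t rule: nat_induct_at_least)
      case base then show ?case using w1 by simp
    next
      case (Suc t)
      have "w (t + 1) \<in> prob_simplex" unfolding upd[OF Suc.hyps]
        by (rule closest_point_in_set[OF closed_simplex simplex_nonempty])
      then show ?case by simp
    qed
    define d where "d t = norm (w t - wstar)^2" for t
    have d2: "0 \<le> d t" "d t \<le> 2" if "t \<ge> 1" for t
      using simplex_dist2[OF wS[OF that] wstar] by (auto simp: d_def)
    have stepR: "R t \<le> (d t - d (t+1))*K* sqrt (real t)/2 + K/sqrt (real t)" if "t \<ge> 1" for t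
    proof -
      define \<eta> where "\<eta> = 1 / (K * sqrt (real t))"
      have eta: "\<eta> \<ge> 0" using Kpos by (simp add: \<eta>_def)
      have pD: "\<forall>i. p t i \<in> D" using forecasts that by blast
      note st = step[OF domain proper continuous exposure convex_exposure M_bound
            pD wS[OF that] wstar
            gradient[rule_format, OF that] eta]
      have K2: "2 * real CARD('m) * M^2 = 2*K^2" by (simp add: K_def power_mult_distrib)
      have "d (t+1) \<le> d t - 2*\<eta>*(v t \<bullet> (w t - wstar)) + \<eta>^2 * (2*K^2)"
        using st(2) upd[OF that] by (simp add: d_def \<eta>_def K2)
      from arith_r[OF Kpos _ \<eta>_def this] that
      have "v t \<bullet> (w t - wstar) \<le> (d t - d (t+1))*K* sqrt (real t)/2 + K/sqrt (real t)" by simp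
      moreover have "R t \<le> v t \<bullet> (w t - wstar)" using st(1) by (simp add: R_def)
      ultimately show ?thesis by linarith
    qed
    have main: "(\<Sum>t = 1..N. R t) \<le> 3*K* sqrt (real N) - d (N+1)*K* sqrt (real N)/2" for N
    proof (induction N)
      case 0 then show ?case by simp
    next
      case (Suc N)
      have "(\<Sum>t = 1..Suc N. R t) = (\<Sum>t = 1..N. R t) + R (Suc N)" by simp
      also have "\<dots> \<le> 3*K* sqrt (real (Suc N)) - d (Suc N + 1)*K* sqrt (real (Suc N))/2"
      proof (rule arith_step[where x = "sqrt (real N)"])
        show "(\<Sum>t = 1..N. R t) \<le> 3*K* sqrt (real N) - d (Suc N)*K* sqrt (real N)/2"
          using Suc.IH by simp
        show "R (Suc N) \<le> (d (Suc N) - d (Suc N + 1))*K* sqrt (real (Suc N))/2 + K/sqrt (real (Suc N))"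
          using stepR[of "Suc N"] by simp
      qed (use Kpos d2[of "Suc N"] d2[of "Suc N + 1"] in auto)
      finally show ?case by simp
    qed
    have "(\<Sum>t = 1..T. R t) \<le> 3*K* sqrt (real T)"
    proof -
      have "0 \<le> d (T+1)*K* sqrt (real T)/2" using d2[of "T+1"] Kpos by simp
      then show ?thesis using main[of T] by linarith
    qed
    then show ?thesis by (simp add: R_def K_def mult.assoc)
  qed
qed

end
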